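(* Let $m\ge 2$, $d_x,d_y\ge 1$, and let $\mathscr{G}=([m],\mathcal{E})$ be an undirected, connected, simple graph. Let $W\in\mathbb{R}^{m\times m}$ be symmetric and row stochastic with $W_{ij}>0$ if and only if $(i,j)\in\mathcal{E}$, $W_{ii}>0$ for all $i$, and with eigenvalues $-1<\lambda_m\le\dots\le\lambda_2<\lambda_1=1$. Let $U=\sqrt{I_m-W}$ denote the positive semidefinite square root of $I_m-W$. For each $i\in[m]$ let $f_i:\mathbb{R}^{d_x}\times\mathbb{R}^{d_y}\to\mathbb{R}$ be differentiable, with $f_i(\cdot,y)$ $\mu_x$-strongly convex for every $y$ and $f_i(x,\cdot)$ $\mu_y$-strongly concave for every $x$ (for some $\mu_x,\mu_y>0$), and let $g:\mathbb{R}^{d_x}\to\mathbb{R}$, $r:\mathbb{R}^{d_y}\to\mathbb{R}$ be proper, convex, possibly non-smooth functions. For $\mathbf{x}=(x^1,\dots,x^m)\in\mathbb{R}^{md_x}$, $\mathbf{y}=(y^1,\dots,y^m)\in\mathbb{R}^{md_y}$ put $F(\mathbf{x},\mathbf{y})=\sum_{i=1}^m f_i(x^i,y^i)$, $G(\mathbf{x})=\sum_{i=1}^m g(x^i)$, $R(\mathbf{y})=\sum_{i=1}^m r(y^i)$, and consider the consensus-constrained saddle point problem $$\min_{\mathbf{x}\in\mathbb{R}^{md_x}}\max_{\mathbf{y}\in\mathbb{R}^{md_y}} F(\mathbf{x},\mathbf{y})+G(\mathbf{x})-R(\mathbf{y})\quad\text{s.t.}\quad (U\otimes I_{d_x})\mathbf{x}=0,\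 (U\otimes I_{d_y})\mathbf{y}=0 \qquad (\mathrm{P})$$ and the Lagrangian $$\mathcal{L}(\mathbf{x},\mathbf{y};S^{\mathbf{x}},S^{\mathbf{y}})=F(\mathbf{x},\mathbf{y})+G(\mathbf{x})-R(\mathbf{y})+\langle S^{\mathbf{x}},(U\otimes I_{d_x})\mathbf{x}\rangle+\langle S^{\mathbf{y}},(U\otimes I_{d_y})\mathbf{y}\rangle,$$ with $S^{\mathbf{x}}\in\mathbb{R}^{md_x}$, $S^{\mathbf{y}}\in\mathbb{R}^{md_y}$, together with the unconstrained saddle point problem $$\min_{\mathbf{x}\in\mathbb{R}^{md_x},\,S^{\mathbf{y}}\in\mathbb{R}^{md_y}}\ \max_{\mathbf{y}\in\mathbb{R}^{md_y},\,S^{\mathbf{x}}\in\mathbb{R}^{md_x}}\ \mathcal{L}(\mathbf{x},\mathbf{y};S^{\mathbf{x}},S^{\mathbf{y}}). \qquad (\mathrm{L})$$ Then $(\mathbf{x}^\star,\mathbf{y}^\star)$ is a saddle point of $(\mathrm{P})$ if and only if there exist $\tilde S^{\mathbf{x}}\in\mathbb{R}^{md_x}$, $\tilde S^{\mathbf{y}}\in\mathbb{R}^{md_y}$ such that $(\mathbf{x}^\star,\mathbf{y}^\star,\tilde S^{\mathbf{x}},\tilde S^{\mathbf{y}})$ is a saddle point of $(\mathrm{L})$.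
   Context: A saddle point of $(\mathrm{P})$ is a pair $(\mathbf{x}^\star,\mathbf{y}^\star)$ of feasible points (satisfying the two consensus constraints) such that $\mathbf{x}^\star$ minimizes $F(\cdot,\mathbf{y}^\star)+G(\cdot)-R(\mathbf{y}^\star)$ over feasible $\mathbf{x}$ and $\mathbf{y}^\star$ maximizes $F(\mathbf{x}^\star,\cdot)+G(\mathbf{x}^\star)-R(\cdot)$ over feasible $\mathbf{y}$. A saddle point of $(\mathrm{L})$ is a point $(\mathbf{x}^\star,\mathbf{y}^\star,\tilde S^{\mathbf{x}},\tilde S^{\mathbf{y}})$ such that $(\mathbf{x}^\star,\tilde S^{\mathbf{y}})$ minimizes $\mathcal{L}(\cdot,\mathbf{y}^\star;\tilde S^{\mathbf{x}},\cdot)$ and $(\mathbf{y}^\star,\tilde S^{\mathbf{x}})$ maximizes $\mathcal{L}(\mathbf{x}^\star,\cdot;\cdot,\tilde S^{\mathbf{y}})$. $\otimes$ denotes the Kronecker product and $I_d$ the $d\times d$ identity. *)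

theory Defs
  imports "HOL-Analysis.Analysis"
begin

text \<open>Block vectors in R^{m d} are represented as real^'d^'m (block i = component i).
  The Kronecker action (U \<otimes> I_d) x has block i equal to sum_j U_ij x^j.\<close>

definition kron_id :: "real^'m^'m \<Rightarrow> real^'d^'m \<Rightarrow> real^'d^'m" where
  "kron_id U x = (\<chi> i. \<Sum>j\<in>UNIV. U $ i $ j *\<^sub>R x $ j)"

definition strongly_convex :: "real \<Rightarrow> ('a::real_inner \<Rightarrow> real) \<Rightarrow> bool" where
  "strongly_convex mu f \<longleftrightarrow> convex_on UNIV (\<lambda>x. f x - mu / 2 * (norm x)\<^sup>2)"

definition strongly_concave :: "real \<Rightarrow> ('a::real_inner \<Rightarrow> real) \<Rightarrow> bool" where
  "strongly_concave mu f \<longleftrightarrow> strongly_convex mu (\<lambda>x. - f x)"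

definition is_eigenvalue :: "real^'n^'n \<Rightarrow> real \<Rightarrow> bool" where
  "is_eigenvalue A l \<longleftrightarrow> (\<exists>v. v \<noteq> 0 \<and> A *v v = l *\<^sub>R v)"

definition saddle_P ::
  "real^'m^'m \<Rightarrow> (real^'dx^'m \<Rightarrow> real^'dy^'m \<Rightarrow> real) \<Rightarrow> real^'dx^'m \<Rightarrow> real^'dy^'m \<Rightarrow> bool" where
  "saddle_P U Phi xs ys \<longleftrightarrow>
     kron_id U xs = 0 \<and> kron_id U ys = 0 \<and>
     (\<forall>x. kron_id U x = 0 \<longrightarrow> Phi xs ys \<le> Phi x ys) \<and>
     (\<forall>y. kron_id U y = 0 \<longrightarrow> Phi xs y \<le> Phi xs ys)"

definition lagr ::
  "real^'m^'m \<Rightarrow> (real^'dx^'m \<Rightarrow> real^'dy^'m \<Rightarrow> real) \<Rightarrow> real^'dx^'m \<Rightarrow> real^'dy^'m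
    \<Rightarrow> real^'dx^'m \<Rightarrow> real^'dy^'m \<Rightarrow> real" where
  "lagr U Phi x y Sx Sy = Phi x y + inner Sx (kron_id U x) + inner Sy (kron_id U y)"

definition saddle_L ::
  "real^'m^'m \<Rightarrow> (real^'dx^'m \<Rightarrow> real^'dy^'m \<Rightarrow> real) \<Rightarrow> real^'dx^'m \<Rightarrow> real^'dy^'m
    \<Rightarrow> real^'dx^'m \<Rightarrow> real^'dy^'m \<Rightarrow> bool" where
  "saddle_L U Phi xs ys Sxs Sys \<longleftrightarrow>
     (\<forall>x Sy. lagr U Phi xs ys Sxs Sys \<le> lagr U Phi x ys Sxs Sy) \<and>
     (\<forall>y Sx. lagr U Phi xs y Sx Sys \<le> lagr U Phi xs ys Sxs Sys)"

end

theory Submission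
  imports Defs
begin


lemma convex_norm2: "convex_on UNIV (\<lambda>x::'a::real_normed_vector. (norm x)\<^sup>2)"
proof (rule convex_onI)
  fix t :: real and x y :: 'a assume t: "0 < t" "t < 1"
  have "norm ((1 - t) *\<^sub>R x + t *\<^sub>R y) \<le> (1-t) * norm x + t * norm y"
    using t by (metis abs_of_nonneg less_eq_real_def norm_scaleR norm_triangle_ineq diff_ge_0_iff_ge)
  hence "(norm ((1 - t) *\<^sub>R x + t *\<^sub>R y))\<^sup>2 \<le> ((1-t) * norm x + t * norm y)\<^sup>2"
    by (simp add: power_mono)
  also have "\<dots> \<le> (1-t) * (norm x)\<^sup>2 + t * (norm y)\<^sup>2"
    using convex_onD[OF convex_power2, of t "norm x" "norm y"] t by (simp add: algebra_simps)
  finally show "(norm ((1 - t) *\<^sub>R x + t *\<^sub>R y))\<^sup>2 \<le> (1-t) * (norm x)\<^sup>2 + t * (norm y)\<^sup>2" .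
qed simp

lemma sc_convex: assumes "strongly_convex mu f" "mu > 0" shows "convex_on UNIV f"
proof -
  have "convex_on UNIV (\<lambda>x. (f x - mu / 2 * (norm x)\<^sup>2) + mu/2 * (norm x)\<^sup>2)"
    using assms convex_norm2 unfolding strongly_convex_def
    by (intro convex_on_add convex_on_cmul) auto
  thus ?thesis by simp
qed

lemma convex_on_comp_linear:
  assumes "convex_on UNIV h" "linear p" shows "convex_on UNIV (\<lambda>x. h (p x))"
  using assms unfolding convex_on_def by (simp add: linear_add linear_scale)

lemma linear_kron: "linear (kron_id U)"
  by (rule linearI) (simp_all add: kron_id_def vec_eq_iff sum.distrib scaleR_add_right scaleR_sum_right sum_distrib_left algebra_simps)

lemma kron_adj: "transpose U = U \<Longrightarrow> inner a (kron_id U x) = inner (kron_id U a) x"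
proof -
  assume T: "transpose U = U"
  have Us: "U $ i $ j = U $ j $ i" for i j 
  proof -
    have "transpose U $ i $ j = U $ j $ i" by (simp add: transpose_def)
    thus ?thesis using T by simp
  qed
  have "inner a (kron_id U x) = (\<Sum>i\<in>UNIV. \<Sum>j\<in>UNIV. \<Sum>k\<in>UNIV. a$i$k * U$i$j * x$j$k)"
    unfolding kron_id_def inner_vec_def
    apply (simp add: inner_sum_right sum_distrib_left mult_ac)
    apply (rule sum.cong[OF refl])
    by (rule sum.swap)
  also have "\<dots> = (\<Sum>j\<in>UNIV. \<Sum>i\<in>UNIV. \<Sum>k\<in>UNIV. a$i$k * U$i$j * x$j$k)"
    by (rule sum.swap)
  also have "\<dots> = (\<Sum>j\<in>UNIV. \<Sum>k\<in>UNIV. \<Sum>i\<in>UNIV. a$i$k * U$i$j * x$j$k)"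
    by (rule sum.cong[OF refl], rule sum.swap)
  also have "\<dots> = (\<Sum>j\<in>UNIV. \<Sum>k\<in>UNIV. (\<Sum>i\<in>UNIV. U$j$i * a$i$k) * x$j$k)"
    by (simp add: sum_distrib_left Us mult_ac)
  also have "\<dots> = inner (kron_id U a) x"
    unfolding kron_id_def inner_vec_def
    by (simp add: inner_sum_left)
  finally show ?thesis .
qed

lemma multiplier:
  fixes h :: "'a::euclidean_space \<Rightarrow> real" and L :: "'a \<Rightarrow> 'b::euclidean_space"
  assumes cvx: "convex_on UNIV h" and lin: "linear L" and x0: "L x0 = 0"
    and opt: "\<And>x. L x = 0 \<Longrightarrow> h x0 \<le> h x"
  shows "\<exists>s. \<forall>x. h x0 \<le> h x + inner s (L x)"
proof -
  define S where "S = (\<lambda>(x,t). (L x, h x - h x0 + t)) ` (UNIV \<times> {0<..})"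
  have Sm: "p \<in> S \<longleftrightarrow> (\<exists>x t. t > 0 \<and> p = (L x, h x - h x0 + t))" for p
    unfolding S_def by force
  have cS: "convex S"
  proof (rule convexI)
    fix p q and u v :: real assume p: "p \<in> S" and q: "q \<in> S" and uv: "0 \<le> u" "0 \<le> v" "u + v = 1"
    obtain x1 t1 where 1: "t1 > 0" "p = (L x1, h x1 - h x0 + t1)" using p Sm by blast
    obtain x2 t2 where 2: "t2 > 0" "q = (L x2, h x2 - h x0 + t2)" using q Sm by blast
    define x where "x = u *\<^sub>R x1 + v *\<^sub>R x2"
    have uu: "u = 1 - v" using uv by simp
    have hx: "h x \<le> u * h x1 + v * h x2" unfolding x_def uu
      using convex_onD[OF cvx, of v x1 x2] uv by simp
    have tpos: "u * t1 + v * t2 > 0"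
    proof (cases "u = 0")
      case True then show ?thesis using uv 2 by simp
    next
      case False then show ?thesis using uv 1 2
        by (metis add_pos_nonneg mult_nonneg_nonneg mult_pos_pos less_eq_real_def order_neq_le_trans)
    qed
    define t where "t = u * h x1 + v * h x2 - h x + u * t1 + v * t2"
    have "t > 0" unfolding t_def using hx tpos by linarith
    have f1: "u *\<^sub>R L x1 + v *\<^sub>R L x2 = L x"
      unfolding x_def by (simp add: linear_add[OF lin] linear_scale[OF lin])
    have f2: "u * (h x1 - h x0 + t1) + v * (h x2 - h x0 + t2) = h x - h x0 + t"
      unfolding t_def using uv(3) by (simp add: algebra_simps uu)
    moreover have "u *\<^sub>R p + v *\<^sub>R q = (L x, h x - h x0 + t)"
      unfolding 1 2 using f1 f2 by simp
    ultimately show "u *\<^sub>R p + v *\<^sub>R q \<in> S" unfolding Sm using \<open>t > 0\<close> by blast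
  qed
  have "(L x0, h x0 - h x0 + 1) \<in> S" unfolding Sm by (intro exI conjI) auto
  hence ne: "S \<noteq> {}" by blast
  have z: "0 \<notin> S"
  proof
    assume "0 \<in> S"
    then obtain x t where "t > 0" "(0::'b\<times>real) = (L x, h x - h x0 + t)" using Sm by blast
    then show False using opt[of x] by (auto simp: zero_prod_def)
  qed
  obtain a where a: "a \<in> span S" "a \<noteq> 0" "\<And>p. p \<in> S \<Longrightarrow> 0 \<le> inner a p"
    using separating_hyperplane_set_0_inspan[OF cS ne z] by blast
  obtain a1 c where ac: "a = (a1, c)" by (cases a)
  have sub: "subspace {p::'b\<times>real. fst p \<in> range L}"
    unfolding subspace_def
  proof (intro conjI ballI allI)
    show "0 \<in> {p::'b\<times>real. fst p \<in> range L}"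
      using linear_0[OF lin] by (auto simp: zero_prod_def intro!: range_eqI[of _ _ 0])
  next
    fix p q assume "p \<in> {p::'b\<times>real. fst p \<in> range L}" "q \<in> {p::'b\<times>real. fst p \<in> range L}"
    then obtain a b where "fst p = L a" "fst q = L b" by auto
    thus "p + q \<in> {p::'b\<times>real. fst p \<in> range L}"
      by (auto simp: linear_add[OF lin] intro!: range_eqI[of _ _ "a + b"])
  next
    fix c :: real and p assume "p \<in> {p::'b\<times>real. fst p \<in> range L}"
    then obtain a where "fst p = L a" by auto
    thus "c *\<^sub>R p \<in> {p::'b\<times>real. fst p \<in> range L}"
      by (auto simp: linear_scale[OF lin] intro!: range_eqI[of _ _ "c *\<^sub>R a"])
  qed
  have "S \<subseteq> {p. fst p \<in> range L}" using Sm by auto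
  hence "span S \<subseteq> {p. fst p \<in> range L}" using span_minimal[OF _ sub] by blast
  then obtain z where z: "a1 = L z" using a(1) ac by auto
  have key: "0 \<le> inner a1 (L x) + c * (h x - h x0 + t)" if "t > 0" for x t
    using a(3)[of "(L x, h x - h x0 + t)"] Sm that ac by auto
  have c0: "c \<ge> 0"
  proof (rule ccontr)
    assume "\<not> c \<ge> 0"
    hence "c < 0" by simp
    have pos: "(1 + \<bar>inner a1 (L x0)\<bar>) / (- c) > 0" using \<open>c < 0\<close>
      by (intro divide_pos_pos) auto
    have "0 \<le> inner a1 (L x0) + c * (h x0 - h x0 + (1 + \<bar>inner a1 (L x0)\<bar>) / (- c))"
      using key[of "(1 + \<bar>inner a1 (L x0)\<bar>) / (- c)" x0] pos \<open>c < 0\<close> by simp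
    also have "\<dots> = inner a1 (L x0) - (1 + \<bar>inner a1 (L x0)\<bar>)" using \<open>c < 0\<close> by simp
    finally show False by simp
  qed
  have "c \<noteq> 0"
  proof
    assume "c = 0"
    hence "0 \<le> inner a1 (L x)" for x using key[of 1 x] by simp
    from this[of "- z"] have "inner a1 a1 \<le> 0" using z by (simp add: linear_neg[OF lin])
    hence "a1 = 0" by (metis inner_gt_zero_iff not_le)
    with \<open>c = 0\<close> ac a(2) show False by (simp add: zero_prod_def)
  qed
  with c0 have cp: "c > 0" by simp
  show ?thesis
  proof (intro exI allI)
    fix x
    have "0 \<le> inner a1 (L x) + c * (h x - h x0 + e)" if "e > 0" for e using key that by blast
    have "0 \<le> inner (a1 /\<^sub>R c) (L x) + (h x - h x0 + e)" if e: "e > 0" for e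
    proof -
      have "0 \<le> (inner a1 (L x) + c * (h x - h x0 + e)) / c" using key[OF e] cp by simp
      also have "\<dots> = inner a1 (L x) / c + (h x - h x0 + e)" using cp by (simp add: field_simps)
      finally show ?thesis by (simp add: divide_inverse mult.commute)
    qed
    hence "h x0 - h x - inner (a1 /\<^sub>R c) (L x) \<le> e" if "e > 0" for e using that by force
    hence "h x0 - h x - inner (a1 /\<^sub>R c) (L x) \<le> 0" by (meson dense not_le)
    thus "h x0 \<le> h x + inner (a1 /\<^sub>R c) (L x)" by simp
  qed
qed

lemma main_equiv:
  fixes Phi :: "real^'dx::finite^'m::finite \<Rightarrow> real^'dy::finite^'m \<Rightarrow> real"
  assumes T: "transpose U = U"
    and cx: "\<And>y. convex_on UNIV (\<lambda>x. Phi x y)"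
    and cy: "\<And>x. convex_on UNIV (\<lambda>y. - Phi x y)"
  shows "saddle_P U Phi xs ys \<longleftrightarrow> (\<exists>Sx Sy. saddle_L U Phi xs ys Sx Sy)"
proof
  assume P: "saddle_P U Phi xs ys"
  hence fx: "kron_id U xs = 0" and fy: "kron_id U ys = 0"
    and mn: "\<And>x. kron_id U x = 0 \<Longrightarrow> Phi xs ys \<le> Phi x ys"
    and mx: "\<And>y. kron_id U y = 0 \<Longrightarrow> Phi xs y \<le> Phi xs ys"
    unfolding saddle_P_def by auto
  obtain s1 where s1: "\<And>x. Phi xs ys \<le> Phi x ys + inner s1 (kron_id U x)"
    using multiplier[OF cx linear_kron fx mn] by blast
  obtain s2 where s2: "\<And>y. - Phi xs ys \<le> - Phi xs y + inner s2 (kron_id U y)"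
    using multiplier[OF cy linear_kron fy, of xs] mx by force
  have "saddle_L U Phi xs ys s1 (- s2)"
    unfolding saddle_L_def lagr_def fx fy
  proof (intro conjI allI)
    fix x Sy show "Phi xs ys + inner s1 0 + inner (- s2) 0 \<le> Phi x ys + inner s1 (kron_id U x) + inner Sy 0"
      using s1[of x] by simp
  next
    fix y Sx show "Phi xs y + inner Sx 0 + inner (- s2) (kron_id U y) \<le> Phi xs ys + inner s1 0 + inner (- s2) 0"
      using s2[of y] by simp
  qed
  thus "\<exists>Sx Sy. saddle_L U Phi xs ys Sx Sy" by blast
next
  assume "\<exists>Sx Sy. saddle_L U Phi xs ys Sx Sy"
  then obtain Sx Sy where L1: "\<And>x Sy'. lagr U Phi xs ys Sx Sy \<le> lagr U Phi x ys Sx Sy'"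
    and L2: "\<And>y Sx'. lagr U Phi xs y Sx' Sy \<le> lagr U Phi xs ys Sx Sy"
    unfolding saddle_L_def by blast
  have "inner (kron_id U ys) (kron_id U ys) \<le> 0"
    using L1[of xs "Sy - kron_id U ys"] unfolding lagr_def by (simp add: inner_diff_left)
  hence fy: "kron_id U ys = 0" by (metis inner_gt_zero_iff not_le)
  have "inner (kron_id U xs) (kron_id U xs) \<le> 0"
    using L2[of ys "Sx + kron_id U xs"] unfolding lagr_def by (simp add: inner_add_left)
  hence fx: "kron_id U xs = 0" by (metis inner_gt_zero_iff not_le)
  show "saddle_P U Phi xs ys"
    unfolding saddle_P_def
  proof (intro conjI allI impI fx fy)
    fix x :: "real^'dx^'m" assume "kron_id U x = 0"
    thus "Phi xs ys \<le> Phi x ys" using L1[of x Sy] fx fy unfolding lagr_def by simp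
  next
    fix y :: "real^'dy^'m" assume "kron_id U y = 0"
    thus "Phi xs y \<le> Phi xs ys" using L2[of y Sx] fx fy unfolding lagr_def by simp
  qed
qed

lemma convex_on_sumf:
  assumes "finite I" "\<And>i. i \<in> I \<Longrightarrow> convex_on UNIV (F i)"
  shows "convex_on UNIV (\<lambda>x. \<Sum>i\<in>I. F i x)"
  using assms
proof (induction I rule: finite_induct)
  case empty then show ?case by (simp add: convex_on_const)
next
  case (insert a I) then show ?case by (simp add: convex_on_add)
qed

lemma convex_on_minus_const:
  assumes "convex_on UNIV f" shows "convex_on UNIV (\<lambda>x. f x - c)"
proof -
  have "convex_on UNIV (\<lambda>x. f x + (- c))"
    using assms by (intro convex_on_add) (simp_all add: convex_on_const)
  thus ?thesis by simp
qed

lemma linear_nth: "linear (\<lambda>x::'a::real_vector^'n. x $ i)"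
  by (rule linearI) simp_all


theorem theorem1:
  fixes E :: "('m::finite \<times> 'm) set"
    and W U :: "real^'m^'m"
    and f :: "'m \<Rightarrow> real^'dx::finite \<Rightarrow> real^'dy::finite \<Rightarrow> real"
    and g :: "real^'dx \<Rightarrow> real" and r :: "real^'dy \<Rightarrow> real"
    and mu_x mu_y :: real
    and xs :: "real^'dx^'m" and ys :: "real^'dy^'m"
  assumes m2: "CARD('m) \<ge> 2"
    and E_sym: "sym E" and E_irrefl: "irrefl E"
    and E_conn: "\<forall>i j. i \<noteq> j \<longrightarrow> (i, j) \<in> E\<^sup>+"
    and W_sym: "transpose W = W"
    and W_nonneg: "\<forall>i j. W $ i $ j \<ge> 0"
    and W_rows: "\<forall>i. (\<Sum>j\<in>UNIV. W $ i $ j) = 1"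
    and W_pat: "\<forall>i j. i \<noteq> j \<longrightarrow> (W $ i $ j > 0 \<longleftrightarrow> (i, j) \<in> E)"
    and W_diag: "\<forall>i. W $ i $ i > 0"
    and W_eig: "\<forall>l. is_eigenvalue W l \<longrightarrow> -1 < l \<and> l \<le> 1"
    and W_eig1: "dim {v :: real^'m. W *v v = v} = 1"
    and U_sym: "transpose U = U"
    and U_psd: "\<forall>v. inner v (U *v v) \<ge> 0"
    and U_sq: "U ** U = mat 1 - W"
    and mu_pos: "mu_x > 0" "mu_y > 0"
    and f_diff: "\<forall>i p. (\<lambda>(x, y). f i x y) differentiable at p"
    and f_cvx: "\<forall>i y. strongly_convex mu_x (\<lambda>x. f i x y)"
    and f_ccv: "\<forall>i x. strongly_concave mu_y (\<lambda>y. f i x y)"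
    and g_cvx: "convex_on UNIV g" and r_cvx: "convex_on UNIV r"
  shows "saddle_P U (\<lambda>x y. (\<Sum>i\<in>UNIV. f i (x $ i) (y $ i)) + (\<Sum>i\<in>UNIV. g (x $ i))
                            - (\<Sum>i\<in>UNIV. r (y $ i))) xs ys
     \<longleftrightarrow> (\<exists>Sxs Sys. saddle_L U (\<lambda>x y. (\<Sum>i\<in>UNIV. f i (x $ i) (y $ i)) + (\<Sum>i\<in>UNIV. g (x $ i))
                            - (\<Sum>i\<in>UNIV. r (y $ i))) xs ys Sxs Sys)"
proof (rule main_equiv[OF U_sym])
  fix y :: "real^'dy^'m"
  have a: "convex_on UNIV (\<lambda>x::real^'dx^'m. f i (x $ i) (y $ i))" for i
    using convex_on_comp_linear[OF sc_convex[OF spec[OF spec[OF f_cvx]] mu_pos(1)] linear_nth] .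
  have b: "convex_on UNIV (\<lambda>x::real^'dx^'m. g (x $ i))" for i
    using convex_on_comp_linear[OF g_cvx linear_nth] .
  show "convex_on UNIV (\<lambda>x. (\<Sum>i\<in>UNIV. f i (x $ i) (y $ i)) + (\<Sum>i\<in>UNIV. g (x $ i))
                            - (\<Sum>i\<in>UNIV. r (y $ i)))"
    by (intro convex_on_minus_const convex_on_add convex_on_sumf a b) auto
next
  fix x :: "real^'dx^'m"
  have a: "convex_on UNIV (\<lambda>y::real^'dy^'m. - f i (x $ i) (y $ i))" for i
  proof -
    have "strongly_convex mu_y (\<lambda>y. - f i (x $ i) y)"
      using f_ccv unfolding strongly_concave_def by blast
    from convex_on_comp_linear[OF sc_convex[OF this mu_pos(2)] linear_nth]
    show ?thesis .
  qed
  have b: "convex_on UNIV (\<lambda>y::real^'dy^'m. r (y $ i))" for i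
    using convex_on_comp_linear[OF r_cvx linear_nth] .
  have "convex_on UNIV (\<lambda>y. (\<Sum>i\<in>UNIV. - f i (x $ i) (y $ i)) + (\<Sum>i\<in>UNIV. r (y $ i))
                            - (\<Sum>i\<in>UNIV. g (x $ i)))"
    by (intro convex_on_minus_const convex_on_add convex_on_sumf a b) auto
  thus "convex_on UNIV (\<lambda>y. - ((\<Sum>i\<in>UNIV. f i (x $ i) (y $ i)) + (\<Sum>i\<in>UNIV. g (x $ i))
                            - (\<Sum>i\<in>UNIV. r (y $ i))))"
    by (simp add: sum_negf algebra_simps)
qed

end
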